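(* Let $T>0$, let $u:\mathbb{R}\times[0,T]\to\mathbb{R}$ be a bounded continuous function solving the Hunter–Saxton equation in the weak sense, and let $\{x_\alpha\}_{\alpha\in A}$ be a family of characteristics associated to $u$ on $[0,T]$ such that $y(t):=\sup_{\alpha}x_\alpha(t)$ is finite for $t\in[0,T]$. Then $y$ is also a characteristic associated to $u$ on $[0,T]$. The same holds for $\inf_\alpha x_\alpha(t)$ (when finite).
   Context: The Hunter–Saxton equation is $\partial_t u+\partial_x\big[\tfrac12 u^2\big]=\tfrac12\int_{-\infty}^x w^2(y,t)\,dy$, $w=\partial_x u$. A weak solution on $[0,T]$ is a continuous function $u$ such that for each $t$, $u(\cdot,t)$ is absolutely continuous on $\mathbb{R}$ with $\partial_x u=w\in L^\infty([0,T];L^2(\mathbb{R}))$, the map $t\mapsto u(\cdot,t)\in L^2_{loc}(\mathbb{R})$ is absolutely continuous, and the equation holds in the sense of distributions. A characteristic associated to $u$ on $[0,T]$ is a Lipschitz continuous ($C^1$) function $x:[0,T]\to\mathbb{R}$ with $\dot x(t)=u(x(t),t)$ for a.e. $t\in[0,T]$. *)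

theory Defs
  imports "HOL-Analysis.Analysis"
begin

text \<open>Convention: functions of space and time are written u x t.\<close>

text \<open>Generalised absolute continuity on a set S of the line, w.r.t. a "distance of increments"
 d s s' (e.g. d s s' = |f s' - f s|, or an L2 distance of f s, f s').\<close>
definition ac_gen :: "real set \<Rightarrow> (real \<Rightarrow> real \<Rightarrow> real) \<Rightarrow> bool" where
  "ac_gen S d \<longleftrightarrow> (\<forall>\<epsilon>>0. \<exists>\<delta>>0. \<forall>(n::nat) (a::nat \<Rightarrow> real) (b::nat \<Rightarrow> real).
      (\<forall>i<n. a i \<le> b i \<and> a i \<in> S \<and> b i \<in> S) \<and>
      (\<forall>i<n. \<forall>j<n. i \<noteq> j \<longrightarrow> {a i<..<b i} \<inter> {a j<..<b j} = {}) \<and>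
      (\<Sum>i<n. b i - a i) < \<delta>
      \<longrightarrow> (\<Sum>i<n. d (a i) (b i)) < \<epsilon>)"

definition abs_cont_real :: "(real \<Rightarrow> real) \<Rightarrow> bool" where
  "abs_cont_real f \<longleftrightarrow> (\<forall>a b. ac_gen {a..b} (\<lambda>s s'. \<bar>f s' - f s\<bar>))"

text \<open>Iterated partial derivatives: True = derivative in x, False = derivative in t.\<close>
fun pderivs :: "bool list \<Rightarrow> (real \<Rightarrow> real \<Rightarrow> real) \<Rightarrow> real \<Rightarrow> real \<Rightarrow> real" where
  "pderivs [] f = f"
| "pderivs (d # ds) f =
     (let g = pderivs ds f in
      if d then (\<lambda>x t. deriv (\<lambda>y. g y t) x) else (\<lambda>x t. deriv (\<lambda>s. g x s) t))"

definition smooth2 :: "(real \<Rightarrow> real \<Rightarrow> real) \<Rightarrow> bool" where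
  "smooth2 \<phi> \<longleftrightarrow> (\<forall>ds. continuous_on UNIV (\<lambda>(x,t). pderivs ds \<phi> x t) \<and>
      (\<forall>x t. (\<lambda>y. pderivs ds \<phi> y t) differentiable (at x) \<and>
             (\<lambda>s. pderivs ds \<phi> x s) differentiable (at t)))"

definition test_fun :: "real \<Rightarrow> (real \<Rightarrow> real \<Rightarrow> real) \<Rightarrow> bool" where
  "test_fun T \<phi> \<longleftrightarrow> smooth2 \<phi> \<and>
     (\<exists>K. compact K \<and> K \<subseteq> UNIV \<times> {0<..<T} \<and> (\<forall>x t. (x,t) \<notin> K \<longrightarrow> \<phi> x t = 0))"

definition HS_weak_solution :: "real \<Rightarrow> (real \<Rightarrow> real \<Rightarrow> real) \<Rightarrow> bool" where
  "HS_weak_solution T u \<longleftrightarrow>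
     continuous_on (UNIV \<times> {0..T}) (\<lambda>(x,t). u x t) \<and>
     (\<exists>w :: real \<Rightarrow> real \<Rightarrow> real.
        \<comment> \<open>u(.,t) absolutely continuous with derivative w(.,t)\<close>
        (\<forall>t\<in>{0..T}. abs_cont_real (\<lambda>x. u x t) \<and>
            (AE x in lborel. ((\<lambda>y. u y t) has_real_derivative w x t) (at x))) \<and>
        \<comment> \<open>w in L-infinity([0,T]; L2(R))\<close>
        (\<lambda>(x,t). w x t) \<in> borel_measurable lborel \<and>
        (\<forall>t\<in>{0..T}. integrable lborel (\<lambda>x. (w x t)\<^sup>2)) \<and>
        (\<exists>C. AE t in lborel. t \<in> {0..T} \<longrightarrow> (\<integral>x. (w x t)\<^sup>2 \<partial>lborel) \<le> C) \<and>
        \<comment> \<open>t \<mapsto> u(.,t) in L2_loc absolutely continuous\<close>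
        (\<forall>R. ac_gen {0..T} (\<lambda>s s'. sqrt (LINT x:{-R..R}|lborel. (u x s' - u x s)\<^sup>2))) \<and>
        \<comment> \<open>the equation in the sense of distributions on R x (0,T)\<close>
        (\<forall>\<phi>. test_fun T \<phi> \<longrightarrow>
           (\<integral>p. (case p of (x,t) \<Rightarrow>
               u x t * pderivs [False] \<phi> x t
             + (1/2) * (u x t)\<^sup>2 * pderivs [True] \<phi> x t
             + (1/2) * (LINT y:{..x}|lborel. (w y t)\<^sup>2) * \<phi> x t) \<partial>lborel) = 0))"

definition characteristic :: "real \<Rightarrow> (real \<Rightarrow> real \<Rightarrow> real) \<Rightarrow> (real \<Rightarrow> real) \<Rightarrow> bool" where
  "characteristic T u X \<longleftrightarrow>
     (\<exists>L. L-lipschitz_on {0..T} X) \<and>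
     (AE t in lborel. t \<in> {0..T} \<longrightarrow> (X has_real_derivative u (X t) t) (at t))"

end

theory Submission
  imports Defs
begin

lemma mono_ae:
  fixes g :: "real \<Rightarrow> real"
  assumes ab: "a \<le> b" and lip: "L-lipschitz_on {a..b} g" and negN: "negligible N"
    and der: "\<And>t. t \<in> {a..b} \<Longrightarrow> t \<notin> N \<Longrightarrow> \<exists>D. (g has_real_derivative D) (at t) \<and> D \<le> B"
  shows "g b - g a \<le> B * (b - a)"
proof -
  have key: "g b - g a \<le> (B + e) * (b - a)" if e: "e > 0" for e
  proof (rule ccontr)
    define h where "h = (\<lambda>t. g t - (B+e)*t)"
    assume "\<not> g b - g a \<le> (B + e) * (b - a)"
    then have hab: "h a < h b" by (simp add: h_def algebra_simps)
    have liph: "(L + \<bar>B+e\<bar>)-lipschitz_on {a..b} h"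
    proof -
      have "\<bar>B+e\<bar>-lipschitz_on {a..b} (\<lambda>t. (B+e)*t)"
        by (rule lipschitz_onI) (auto simp: dist_real_def abs_mult[symmetric] algebra_simps)
      then show ?thesis unfolding h_def by (intro lipschitz_intros lip)
    qed
    have conth: "continuous_on {a..b} h" using liph lipschitz_on_continuous_on by blast
    have negl: "negligible (h ` (N \<inter> {a..b}))"
    proof (rule negligible_locally_Lipschitz_image)
      show "negligible (N \<inter> {a..b})" using negN negligible_subset by blast
      fix x assume x: "x \<in> N \<inter> {a..b}"
      show "\<exists>T B. open T \<and> x \<in> T \<and> (\<forall>y\<in>N \<inter> {a..b} \<inter> T. norm (h y - h x) \<le> B * norm (y - x))"
        apply (rule exI[of _ UNIV], rule exI[of _ "L + \<bar>B+e\<bar>"])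
        using lipschitz_onD[OF liph] x by (auto simp: dist_real_def abs_minus_commute)
    qed auto
    have "\<not> negligible {h a<..<h b}"
      using negligible_interval(2)[of "h a" "h b"] hab by simp
    then obtain c where c: "c \<in> {h a<..<h b}" "c \<notin> h ` (N \<inter> {a..b})"
      using negl negligible_subset by blast
    define S where "S = {a..b} \<inter> h -` {..c}"
    have clS: "closed S" unfolding S_def by (rule continuous_closed_preimage[OF conth]) auto
    have aS: "a \<in> S" using c ab by (auto simp: S_def)
    have bddS: "bdd_above S" unfolding S_def by (rule bdd_aboveI[of _ b]) auto
    define ts where "ts = Sup S"
    have tsS: "ts \<in> S" unfolding ts_def using closed_contains_Sup[OF _ bddS clS] aS by blast
    have tsb: "ts < b"
    proof -
      have "ts \<le> b" using tsS by (auto simp: S_def)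
      moreover have "ts \<noteq> b" using tsS c by (auto simp: S_def)
      ultimately show ?thesis by simp
    qed
    have hts: "h ts = c"
    proof -
      have "continuous_on {ts..b} h" using conth tsS by (auto simp: S_def intro: continuous_on_subset)
      then obtain x where x: "ts \<le> x" "x \<le> b" "h x = c"
        using IVT'[of h ts c b] tsS c tsb by (auto simp: S_def)
      then have "x \<in> S" using tsS by (auto simp: S_def)
      then have "x \<le> ts" unfolding ts_def using bddS by (rule cSup_upper)
      then show ?thesis using x by simp
    qed
    have tsN: "ts \<notin> N" using hts c tsS by (auto simp: S_def)
    obtain D where D: "(g has_real_derivative D) (at ts)" "D \<le> B"
      using der[OF _ tsN] tsS by (auto simp: S_def)
    have "(h has_real_derivative (D - (B+e))) (at ts)"
      unfolding h_def by (auto intro!: derivative_eq_intros D(1))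
    then obtain d where d: "d > 0" "\<And>k. k > 0 \<Longrightarrow> k < d \<Longrightarrow> h (ts + k) < h ts"
      using DERIV_neg_dec_right[of h "D - (B+e)" ts] D(2) e by force
    define k where "k = min (d/2) (b - ts)"
    have k: "k > 0" "k < d" "ts + k \<le> b" using d tsb by (auto simp: k_def)
    have "ts + k \<in> S" using d(2)[OF k(1,2)] hts k tsS by (auto simp: S_def)
    then have "ts + k \<le> ts" unfolding ts_def using bddS by (rule cSup_upper)
    then show False using k by simp
  qed
  show ?thesis
  proof (rule field_le_epsilon)
    fix e :: real assume e: "e > 0"
    have "g b - g a \<le> (B + e/(b-a+1)) * (b - a)" using key[of "e/(b-a+1)"] e ab by simp
    also have "\<dots> = B*(b-a) + e * ((b-a)/(b-a+1))" by (simp add: algebra_simps)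
    also have "\<dots> \<le> B*(b-a) + e * 1"
      using e ab by (intro add_left_mono mult_left_mono) auto
    finally show "g b - g a \<le> B * (b - a) + e" by simp
  qed
qed

lemma char_est:
  fixes u :: "real \<Rightarrow> real \<Rightarrow> real"
  assumes ch: "characteristic T u X" and st: "0 \<le> s" "s \<le> t" "t \<le> T"
    and bnd: "\<And>\<tau>. \<tau> \<in> {s..t} \<Longrightarrow> lo \<le> u (X \<tau>) \<tau> \<and> u (X \<tau>) \<tau> \<le> hi"
  shows "lo*(t-s) \<le> X t - X s \<and> X t - X s \<le> hi*(t-s)"
proof -
  from ch obtain L where L: "L-lipschitz_on {0..T} X"
    and ae: "AE t in lborel. t\<in>{0..T} \<longrightarrow> (X has_real_derivative u (X t) t) (at t)"
    unfolding characteristic_def by blast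
  from ae obtain N where N: "{t\<in>space lborel. \<not>(t\<in>{0..T} \<longrightarrow> (X has_real_derivative u (X t) t) (at t))} \<subseteq> N"
     "emeasure lborel N = 0" "N \<in> sets lborel"
    by (auto elim!: AE_E)
  have "N \<in> null_sets lborel" using N by auto
  then have negN: "negligible N"
    unfolding negligible_iff_null_sets by (auto intro: null_sets_completionI)
  have L': "L-lipschitz_on {s..t} X" using L st by (auto intro: lipschitz_on_subset)
  have der: "(X has_real_derivative u (X \<tau>) \<tau>) (at \<tau>)" if "\<tau> \<in> {s..t}" "\<tau> \<notin> N" for \<tau>
    proof (rule ccontr)
    assume "\<not> ?thesis"
    then have "\<tau> \<in> {x\<in>space lborel. \<not>(x\<in>{0..T} \<longrightarrow> (X has_real_derivative u (X x) x) (at x))}"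
      using that st by auto
    then show False using N(1) that by blast
  qed
  have up: "X t - X s \<le> hi*(t-s)"
    by (rule mono_ae[OF st(2) L' negN]) (use der bnd in blast)
  have "(\<lambda>\<tau>. - X \<tau>) t - (\<lambda>\<tau>. - X \<tau>) s \<le> (-lo)*(t-s)"
  proof (rule mono_ae[OF st(2) _ negN])
    show "L-lipschitz_on {s..t} (\<lambda>\<tau>. - X \<tau>)" using L' by (intro lipschitz_intros)
    fix \<tau> assume "\<tau> \<in> {s..t}" "\<tau> \<notin> N"
    then show "\<exists>D. ((\<lambda>\<tau>. - X \<tau>) has_real_derivative D) (at \<tau>) \<and> D \<le> - lo"
      using der bnd by (auto intro!: exI[of _ "- u (X \<tau>) \<tau>"] derivative_eq_intros)
  qed
  then show ?thesis using up by (simp add: algebra_simps)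
qed

lemma quot_bound:
  fixes D k v c :: real
  assumes "k > 0" "(v - c)*k \<le> D" "D \<le> (v + c)*k"
  shows "\<bar>D/k - v\<bar> \<le> c"
proof -
  have "v - c \<le> D/k" using assms by (simp add: pos_le_divide_eq)
  moreover have "D/k \<le> v + c" using assms by (simp add: pos_divide_le_eq)
  ultimately show ?thesis by (simp add: abs_le_iff)
qed

lemma sup_char:
  fixes u :: "real \<Rightarrow> real \<Rightarrow> real" and X :: "'a \<Rightarrow> real \<Rightarrow> real"
  assumes T: "T > 0" and cont: "continuous_on (UNIV \<times> {0..T}) (\<lambda>(x,t). u x t)"
    and M: "\<And>x t. t \<in> {0..T} \<Longrightarrow> \<bar>u x t\<bar> \<le> M"
    and A: "A \<noteq> {}" and ch: "\<And>\<alpha>. \<alpha>\<in>A \<Longrightarrow> characteristic T u (X \<alpha>)"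
    and bdd: "\<And>t. t\<in>{0..T} \<Longrightarrow> bdd_above ((\<lambda>\<alpha>. X \<alpha> t) ` A)"
  shows "characteristic T u (\<lambda>t. SUP \<alpha>\<in>A. X \<alpha> t)"
proof -
  define Y where "Y = (\<lambda>t. SUP \<alpha>\<in>A. X \<alpha> t)"
  have M0: "0 \<le> M" using M[of 0 0] T by force
  have XY: "X \<alpha> t \<le> Y t" if "\<alpha>\<in>A" "t\<in>{0..T}" for \<alpha> t
    unfolding Y_def by (rule cSUP_upper[OF that(1) bdd[OF that(2)]])
  have Xlip: "\<bar>X \<alpha> t - X \<alpha> s\<bar> \<le> M*(t-s)" if "\<alpha>\<in>A" "0\<le>s" "s\<le>t" "t\<le>T" for \<alpha> s t
  proof -
    have "-M \<le> u (X \<alpha> \<tau>) \<tau> \<and> u (X \<alpha> \<tau>) \<tau> \<le> M" if "\<tau> \<in> {s..t}" for \<tau>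
    proof -
      have "\<tau> \<in> {0..T}" using that \<open>0\<le>s\<close> \<open>t\<le>T\<close> by auto
      from M[OF this, of "X \<alpha> \<tau>"] show ?thesis by (simp add: abs_le_iff)
    qed
    from char_est[OF ch[OF that(1)] that(2-4), of "-M" M, OF this] show ?thesis
      by (simp add: abs_le_iff)
  qed
  have Xlip': "X \<alpha> t \<le> X \<alpha> s + M*\<bar>t-s\<bar>" if "\<alpha>\<in>A" "s\<in>{0..T}" "t\<in>{0..T}" for \<alpha> s t
  proof (cases "s \<le> t")
    case True then show ?thesis using Xlip[OF that(1), of s t] that by (auto simp: abs_le_iff)
  next
    case False then show ?thesis using Xlip[OF that(1), of t s] that by (auto simp: abs_le_iff)
  qed
  have Ylip1: "Y t \<le> Y s + M*\<bar>t-s\<bar>" if "s\<in>{0..T}" "t\<in>{0..T}" for s t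
    unfolding Y_def[THEN fun_cong, of t]
  proof (rule cSUP_least[OF A])
    fix \<alpha> assume \<alpha>: "\<alpha>\<in>A"
    show "X \<alpha> t \<le> Y s + M*\<bar>t-s\<bar>" using Xlip'[OF \<alpha> that] XY[OF \<alpha> that(1)] by linarith
  qed
  have Ylip: "\<bar>Y t - Y s\<bar> \<le> M*\<bar>t-s\<bar>" if "s\<in>{0..T}" "t\<in>{0..T}" for s t
    using Ylip1[OF that] Ylip1[OF that(2,1)] by (auto simp: abs_le_iff abs_minus_commute)
  have lipY: "M-lipschitz_on {0..T} Y"
    by (rule lipschitz_onI) (use Ylip M0 in \<open>auto simp: dist_real_def\<close>)
  have derY: "(Y has_real_derivative u (Y t0) t0) (at t0)" if t0: "0 < t0" "t0 < T" for t0
  proof -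
    define v where "v = u (Y t0) t0"
    have cu: "\<exists>\<eta>>0. \<forall>x t. t\<in>{0..T} \<and> \<bar>x - Y t0\<bar> < \<eta> \<and> \<bar>t - t0\<bar> < \<eta> \<longrightarrow> \<bar>u x t - v\<bar> < e"
      if e: "e > 0" for e
    proof -
      have p: "(Y t0, t0) \<in> UNIV \<times> {0..T}" using t0 by auto
      obtain d where d: "d > 0" "\<And>p. p \<in> UNIV \<times> {0..T} \<Longrightarrow> dist p (Y t0, t0) < d \<Longrightarrow>
          dist ((\<lambda>(x,t). u x t) p) ((\<lambda>(x,t). u x t) (Y t0, t0)) < e"
        using cont[unfolded continuous_on_iff, rule_format, OF p e] by blast
      show ?thesis
      proof (intro exI[of _ "d / sqrt 2"] conjI allI impI)
        show "d / sqrt 2 > 0" using d by simp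
        fix x t assume H: "t\<in>{0..T} \<and> \<bar>x - Y t0\<bar> < d / sqrt 2 \<and> \<bar>t - t0\<bar> < d / sqrt 2"
        have "dist (x, t) (Y t0, t0) < d"
          unfolding dist_Pair_Pair dist_real_def using H by (intro real_sqrt_sum_squares_less) auto
        from d(2)[OF _ this] H show "\<bar>u x t - v\<bar> < e" by (auto simp: v_def dist_real_def)
      qed
    qed
    show ?thesis
      unfolding DERIV_def LIM_eq v_def[symmetric]
    proof (intro allI impI)
      fix r :: real assume r: "r > 0"
      define e where "e = r/3"
      have e: "e > 0" using r by (simp add: e_def)
      obtain \<eta> where \<eta>: "\<eta> > 0" "\<And>x t. t\<in>{0..T} \<Longrightarrow> \<bar>x - Y t0\<bar> < \<eta> \<Longrightarrow> \<bar>t - t0\<bar> < \<eta> \<Longrightarrow> \<bar>u x t - v\<bar> < e"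
        using cu[OF e] by blast
      define K where "K = 2*M+e+1"
      have K: "K > 0" "K \<ge> 1" "2*M + e \<le> K" using M0 e by (auto simp: K_def)
      define \<delta> where "\<delta> = min (min t0 (T - t0)) (\<eta>/K)"
      have \<delta>: "\<delta> > 0" using t0 \<eta> K by (auto simp: \<delta>_def)
      have core: "(v - 2*e)*(t-s) \<le> Y t - Y s \<and> Y t - Y s \<le> (v+2*e)*(t-s)"
        if st: "0 \<le> s" "s < t" "t \<le> T" "s \<le> t0" "t0 \<le> t" "t - s < \<eta>/K" for s t
      proof -
        define k where "k = t - s"
        have k: "k > 0" using st by (simp add: k_def)
        have kK: "K*k < \<eta>" using st K by (simp add: k_def pos_less_divide_eq mult.commute)
        have keta: "k < \<eta>" using kK K k by (smt (verit) mult_le_cancel_right1)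
        have Mk: "(2*M+e)*k < \<eta>" using kK K k by (smt (verit) mult_right_mono)
        have tau: "\<tau> \<in> {0..T}" "\<bar>\<tau> - t0\<bar> \<le> k" "\<bar>\<tau> - t0\<bar> < \<eta>" if "\<tau> \<in> {s..t}" for \<tau>
          using that st keta by (auto simp: k_def)
        have YY: "\<bar>Y \<tau> - Y t0\<bar> \<le> M*k" if "\<tau> \<in> {s..t}" for \<tau>
        proof -
          have "\<bar>Y \<tau> - Y t0\<bar> \<le> M*\<bar>\<tau> - t0\<bar>" using Ylip[of t0 \<tau>] tau[OF that] t0 by auto
          also have "\<dots> \<le> M*k" using tau(2)[OF that] M0 by (rule mult_left_mono)
          finally show ?thesis .
        qed
        have sT: "s \<in> {0..T}" "t \<in> {0..T}" using st by auto
        have "Y t - e*k < Y t" using e k by simp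
        then obtain \<alpha> where \<alpha>: "\<alpha> \<in> A" "Y t - e*k < X \<alpha> t"
          unfolding Y_def[THEN fun_cong, of t] using less_cSUP_iff[OF A bdd[OF sT(2)]] by blast
        have bnd1: "-M \<le> u (X \<alpha> \<tau>) \<tau> \<and> u (X \<alpha> \<tau>) \<tau> \<le> v + e" if "\<tau> \<in> {s..t}" for \<tau>
        proof -
          have "X \<alpha> \<tau> \<le> Y \<tau>" using XY[OF \<alpha>(1) tau(1)[OF that]] .
          moreover have "X \<alpha> t - X \<alpha> \<tau> \<le> M*k"
            using Xlip[OF \<alpha>(1), of \<tau> t] that st M0 by (auto simp: k_def abs_le_iff intro: order_trans[OF _ mult_left_mono[of "t-\<tau>"]])
          moreover have "\<bar>Y t - Y t0\<bar> \<le> M*k" using YY[of t] st by auto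
          ultimately have "\<bar>X \<alpha> \<tau> - Y t0\<bar> \<le> (2*M+e)*k" using YY[OF that] \<alpha>(2) mult_nonneg_nonneg[OF M0 less_imp_le[OF k]] mult_pos_pos[OF e k]
            by (auto simp: abs_le_iff algebra_simps)
          then have "\<bar>X \<alpha> \<tau> - Y t0\<bar> < \<eta>" using Mk by linarith
          from \<eta>(2)[OF tau(1)[OF that] this tau(3)[OF that]] show ?thesis
            using M[OF tau(1)[OF that], of "X \<alpha> \<tau>"] by (auto simp: abs_le_iff)
        qed
        have up: "X \<alpha> t - X \<alpha> s \<le> (v+e)*(t-s)"
          using char_est[OF ch[OF \<alpha>(1)] st(1) less_imp_le[OF st(2)] st(3) bnd1] by blast
        have "Y t - Y s \<le> (v+2*e)*(t-s)"
          using up \<alpha>(2) XY[OF \<alpha>(1) sT(1)] by (simp add: k_def algebra_simps)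
        have "Y s - e*k < Y s" using e k by simp
        then obtain \<beta> where \<beta>: "\<beta> \<in> A" "Y s - e*k < X \<beta> s"
          unfolding Y_def[THEN fun_cong, of s] using less_cSUP_iff[OF A bdd[OF sT(1)]] by blast
        have bnd2: "v - e \<le> u (X \<beta> \<tau>) \<tau> \<and> u (X \<beta> \<tau>) \<tau> \<le> M" if "\<tau> \<in> {s..t}" for \<tau>
        proof -
          have "X \<beta> \<tau> \<le> Y \<tau>" using XY[OF \<beta>(1) tau(1)[OF that]] .
          moreover have "X \<beta> s - X \<beta> \<tau> \<le> M*k"
            using Xlip[OF \<beta>(1), of s \<tau>] that st M0 by (auto simp: k_def abs_le_iff intro: order_trans[OF _ mult_left_mono[of "\<tau>-s"]])
          moreover have "\<bar>Y s - Y t0\<bar> \<le> M*k" using YY[of s] st by auto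
          ultimately have "\<bar>X \<beta> \<tau> - Y t0\<bar> \<le> (2*M+e)*k" using YY[OF that] \<beta>(2) mult_nonneg_nonneg[OF M0 less_imp_le[OF k]] mult_pos_pos[OF e k]
            by (auto simp: abs_le_iff algebra_simps)
          then have "\<bar>X \<beta> \<tau> - Y t0\<bar> < \<eta>" using Mk by linarith
          from \<eta>(2)[OF tau(1)[OF that] this tau(3)[OF that]] show ?thesis
            using M[OF tau(1)[OF that], of "X \<beta> \<tau>"] by (auto simp: abs_le_iff)
        qed
        have lo: "(v-e)*(t-s) \<le> X \<beta> t - X \<beta> s"
          using char_est[OF ch[OF \<beta>(1)] st(1) less_imp_le[OF st(2)] st(3) bnd2] by blast
        have "(v - 2*e)*(t-s) \<le> Y t - Y s"
          using lo \<beta>(2) XY[OF \<beta>(1) sT(2)] by (simp add: k_def algebra_simps)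
        with \<open>Y t - Y s \<le> (v+2*e)*(t-s)\<close> show ?thesis by blast
      qed
      show "\<exists>s>0. \<forall>h. h \<noteq> 0 \<and> norm (h - 0) < s \<longrightarrow> norm ((Y (t0 + h) - Y t0) / h - v) < r"
      proof (intro exI[of _ \<delta>] conjI allI impI \<delta>)
        fix h :: real assume h: "h \<noteq> 0 \<and> norm (h - 0) < \<delta>"
        have hd: "\<bar>h\<bar> < t0" "\<bar>h\<bar> < T - t0" "\<bar>h\<bar> < \<eta>/K" using h by (auto simp: \<delta>_def)
        have "\<bar>(Y (t0 + h) - Y t0) / h - v\<bar> \<le> 2*e"
        proof (cases "h > 0")
          case True
          from core[of t0 "t0+h"] True hd t0
          have "(v - 2*e)*h \<le> Y (t0+h) - Y t0 \<and> Y (t0+h) - Y t0 \<le> (v+2*e)*h" by auto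
          then show ?thesis using quot_bound[OF True] by blast
        next
          case False
          then have hn: "-h > 0" using h by auto
          from core[of "t0+h" t0] hn hd t0
          have "(v - 2*e)*(-h) \<le> Y t0 - Y (t0+h) \<and> Y t0 - Y (t0+h) \<le> (v+2*e)*(-h)" by auto
          then have "\<bar>(Y t0 - Y (t0+h))/(-h) - v\<bar> \<le> 2*e" using quot_bound[OF hn] by blast
          moreover have "(Y t0 - Y (t0+h))/(-h) = (Y (t0 + h) - Y t0) / h"
            by (simp add: divide_simps)
          ultimately show ?thesis by simp
        qed
        then show "norm ((Y (t0 + h) - Y t0) / h - v) < r" using e r by (simp add: e_def)
      qed
    qed
  qed
  have "AE t in lborel. t \<in> {0..T} \<longrightarrow> (Y has_real_derivative u (Y t) t) (at t)"
    using AE_lborel_singleton[of 0] AE_lborel_singleton[of T]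
  proof eventually_elim
    case (elim t)
    then show ?case using derY[of t] by (auto simp: less_le)
  qed
  with lipY show ?thesis unfolding characteristic_def Y_def by blast
qed

lemma char_neg:
  fixes u :: "real \<Rightarrow> real \<Rightarrow> real"
  assumes "characteristic T (\<lambda>x t. - u (-x) t) Z"
  shows "characteristic T u (\<lambda>t. - Z t)"
proof -
  from assms obtain L where L: "L-lipschitz_on {0..T} Z"
    and ae: "AE t in lborel. t\<in>{0..T} \<longrightarrow> (Z has_real_derivative - u (- Z t) t) (at t)"
    unfolding characteristic_def by blast
  have "L-lipschitz_on {0..T} (\<lambda>t. - Z t)" using L by (intro lipschitz_intros)
  moreover have "AE t in lborel. t\<in>{0..T} \<longrightarrow> ((\<lambda>t. - Z t) has_real_derivative u (- Z t) t) (at t)"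
    using ae
  proof eventually_elim
    case (elim t)
    then show ?case by (auto intro!: derivative_eq_intros)
  qed
  ultimately show ?thesis unfolding characteristic_def by blast
qed

theorem lemma3p3:
  fixes T :: real and u :: "real \<Rightarrow> real \<Rightarrow> real"
    and A :: "'a set" and X :: "'a \<Rightarrow> real \<Rightarrow> real"
  assumes "T > 0"
    and "bounded ((\<lambda>(x,t). u x t) ` (UNIV \<times> {0..T}))"
    and "HS_weak_solution T u"
    and "A \<noteq> {}"
    and "\<forall>\<alpha>\<in>A. characteristic T u (X \<alpha>)"
  shows "((\<forall>t\<in>{0..T}. bdd_above ((\<lambda>\<alpha>. X \<alpha> t) ` A))
            \<longrightarrow> characteristic T u (\<lambda>t. SUP \<alpha>\<in>A. X \<alpha> t))
       \<and> ((\<forall>t\<in>{0..T}. bdd_below ((\<lambda>\<alpha>. X \<alpha> t) ` A))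
            \<longrightarrow> characteristic T u (\<lambda>t. INF \<alpha>\<in>A. X \<alpha> t))"
proof -
  have cont: "continuous_on (UNIV \<times> {0..T}) (\<lambda>(x,t). u x t)"
    using assms(3) unfolding HS_weak_solution_def by blast
  obtain M where M: "\<And>p. p \<in> (\<lambda>(x,t). u x t) ` (UNIV \<times> {0..T}) \<Longrightarrow> norm p \<le> M"
    using assms(2) unfolding bounded_iff by blast
  have Mu: "\<bar>u x t\<bar> \<le> M" if "t \<in> {0..T}" for x t
    using M[of "u x t"] that by force
  have P1: "characteristic T u (\<lambda>t. SUP \<alpha>\<in>A. X \<alpha> t)"
    if "\<forall>t\<in>{0..T}. bdd_above ((\<lambda>\<alpha>. X \<alpha> t) ` A)"
    by (rule sup_char[OF assms(1) cont _ assms(4), of M]) (use Mu assms(5) that in auto)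
  have P2: "characteristic T u (\<lambda>t. INF \<alpha>\<in>A. X \<alpha> t)"
    if bb: "\<forall>t\<in>{0..T}. bdd_below ((\<lambda>\<alpha>. X \<alpha> t) ` A)"
  proof -
    define u' where "u' = (\<lambda>x t. - u (-x) t)"
    have cont': "continuous_on (UNIV \<times> {0..T}) (\<lambda>(x,t). u' x t)"
    proof -
      have "continuous_on (UNIV \<times> {0..T}) ((\<lambda>(x,t). u x t) \<circ> (\<lambda>p. (- fst p, snd p)))"
      proof (rule continuous_on_compose)
        show "continuous_on (UNIV \<times> {0..T}) (\<lambda>p::real\<times>real. (- fst p, snd p))"
          by (intro continuous_intros)
        have img: "(\<lambda>p::real\<times>real. (- fst p, snd p)) ` (UNIV \<times> {0..T}) \<subseteq> UNIV \<times> {0..T}" by auto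
        show "continuous_on ((\<lambda>p. (- fst p, snd p)) ` (UNIV \<times> {0..T})) (\<lambda>(x,t). u x t)"
          by (rule continuous_on_subset[OF cont img])
      qed
      then have "continuous_on (UNIV \<times> {0..T}) (\<lambda>p. - ((\<lambda>(x,t). u x t) \<circ> (\<lambda>p. (- fst p, snd p))) p)"
        by (rule continuous_on_minus)
      then show ?thesis by (simp add: u'_def case_prod_beta o_def)
    qed
    have Mu': "\<bar>u' x t\<bar> \<le> M" if "t \<in> {0..T}" for x t
      using Mu[OF that] by (simp add: u'_def)
    have ch': "characteristic T u' (\<lambda>t. - X \<alpha> t)" if "\<alpha> \<in> A" for \<alpha>
    proof -
      have "characteristic T (\<lambda>x t. - u' (-x) t) (X \<alpha>)"
        using assms(5) that by (simp add: u'_def)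
      from char_neg[OF this] show ?thesis .
    qed
    have bdd': "bdd_above ((\<lambda>\<alpha>. - X \<alpha> t) ` A)" if "t \<in> {0..T}" for t
      using bb that bdd_above_uminus[of "(\<lambda>\<alpha>. X \<alpha> t) ` A"] by (simp add: image_image)
    have "characteristic T u' (\<lambda>t. SUP \<alpha>\<in>A. - X \<alpha> t)"
      by (rule sup_char[OF assms(1) cont' _ assms(4), of M]) (use Mu' ch' bdd' in auto)
    then have "characteristic T u (\<lambda>t. - (SUP \<alpha>\<in>A. - X \<alpha> t))"
      by (intro char_neg) (simp add: u'_def)
    moreover have "(\<lambda>t. - (SUP \<alpha>\<in>A. - X \<alpha> t)) = (\<lambda>t. INF \<alpha>\<in>A. X \<alpha> t)"
      by (simp add: Inf_real_def image_image)
    ultimately show ?thesis by simp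
  qed
  show ?thesis using P1 P2 by blast
qed

end
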